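(* Let $P$ be a set of $n$ points in general position in the plane such that the number $m$ of points of $P$ on the boundary of the convex hull of $P$ satisfies $m\in\{8,9\}$. Then $\mu(D(P))\geq\binom{n}{2}-8$.
   Context: General position means no three points collinear. $D(P)$ is the graph whose vertices are all closed segments with both endpoints in $P$, two adjacent iff disjoint. For a graph $G$ and $U\subseteq V(G)$, two distinct vertices $x,y\in U$ are $U$-mutually visible if $G$ contains a shortest $x$-$y$ path none of whose internal vertices lies in $U$; $U$ is a mutual-visibility set if every two distinct vertices of $U$ are $U$-mutually visible. $\mu(G)$ is the maximum size of a mutual-visibility set of $G$. *)

theory Defs
  imports "HOL-Analysis.Analysis"
begin

definition is_walk :: "'v set \<Rightarrow> ('v \<Rightarrow> 'v \<Rightarrow> bool) \<Rightarrow> 'v list \<Rightarrow> bool" where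
  "is_walk V E xs \<longleftrightarrow> xs \<noteq> [] \<and> set xs \<subseteq> V \<and>
     (\<forall>i. Suc i < length xs \<longrightarrow> E (xs ! i) (xs ! Suc i))"

definition walk_between :: "'v set \<Rightarrow> ('v \<Rightarrow> 'v \<Rightarrow> bool) \<Rightarrow> 'v \<Rightarrow> 'v \<Rightarrow> 'v list \<Rightarrow> bool" where
  "walk_between V E x y xs \<longleftrightarrow> is_walk V E xs \<and> hd xs = x \<and> last xs = y"

text \<open>A shortest x-y path: an x-y walk of minimum length (such a walk is a path).\<close>
definition shortest_path :: "'v set \<Rightarrow> ('v \<Rightarrow> 'v \<Rightarrow> bool) \<Rightarrow> 'v \<Rightarrow> 'v \<Rightarrow> 'v list \<Rightarrow> bool" where
  "shortest_path V E x y xs \<longleftrightarrow> walk_between V E x y xs \<and>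
     (\<forall>ys. walk_between V E x y ys \<longrightarrow> length xs \<le> length ys)"

definition mutually_visible :: "'v set \<Rightarrow> ('v \<Rightarrow> 'v \<Rightarrow> bool) \<Rightarrow> 'v set \<Rightarrow> 'v \<Rightarrow> 'v \<Rightarrow> bool" where
  "mutually_visible V E U x y \<longleftrightarrow>
     (\<exists>xs. shortest_path V E x y xs \<and> (\<forall>z \<in> set (butlast (tl xs)). z \<notin> U))"

definition mutual_visibility_set :: "'v set \<Rightarrow> ('v \<Rightarrow> 'v \<Rightarrow> bool) \<Rightarrow> 'v set \<Rightarrow> bool" where
  "mutual_visibility_set V E U \<longleftrightarrow> U \<subseteq> V \<and>
     (\<forall>x\<in>U. \<forall>y\<in>U. x \<noteq> y \<longrightarrow> mutually_visible V E U x y)"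

definition mu :: "'v set \<Rightarrow> ('v \<Rightarrow> 'v \<Rightarrow> bool) \<Rightarrow> nat" where
  "mu V E = Max {card U | U. mutual_visibility_set V E U}"

definition seg_vertices :: "(real^2) set \<Rightarrow> (real^2) set set" where
  "seg_vertices P = {closed_segment a b | a b. a \<in> P \<and> b \<in> P \<and> a \<noteq> b}"

definition seg_adj :: "(real^2) set \<Rightarrow> (real^2) set \<Rightarrow> bool" where
  "seg_adj S T \<longleftrightarrow> S \<inter> T = {}"

definition general_position :: "(real^2) set \<Rightarrow> bool" where
  "general_position P \<longleftrightarrow>
     (\<forall>a\<in>P. \<forall>b\<in>P. \<forall>c\<in>P. a \<noteq> b \<and> a \<noteq> c \<and> b \<noteq> c \<longrightarrow> \<not> collinear {a, b, c})"

end

theory Submission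
  imports Defs
begin

lemma inner2: "(x::real^2) \<bullet> y = x$1*y$1 + x$2*y$2"
  by (simp add: inner_vec_def UNIV_2)
lemma vec2_eq: "((x::real^2) = y) \<longleftrightarrow> x$1 = y$1 \<and> x$2 = y$2"
  by (simp add: vec_eq_iff forall_2)

definition orient :: "real^2 \<Rightarrow> real^2 \<Rightarrow> real^2 \<Rightarrow> real" where
  "orient a b c = (b$1 - a$1)*(c$2 - a$2) - (b$2 - a$2)*(c$1 - a$1)"

lemma orient_rot: "orient a b c = orient b c a"
  by (simp add: orient_def algebra_simps)
lemma orient_swap: "orient a c b = - orient a b c"
  by (simp add: orient_def algebra_simps)
lemma orient_swap1: "orient b a c = - orient a b c"
  by (simp add: orient_def algebra_simps)
lemma orient_same [simp]: "orient a b b = 0" "orient a a b = 0" "orient a b a = 0"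
  by (simp_all add: orient_def algebra_simps)

lemma orient0_collinear:
  assumes "orient a b c = 0" shows "collinear {a,b,c}"
proof (cases "a = b")
  case True then show ?thesis by (simp add: collinear_2)
next
  case False
  have "{a,b,c} = {b,a,c}" by auto
  moreover have "collinear {0, b - a, c - a}"
  proof -
    define t where "t = (if b$1 \<noteq> a$1 then (c$1-a$1)/(b$1-a$1) else (c$2-a$2)/(b$2-a$2))"
    have ne: "b$1 \<noteq> a$1 \<or> b$2 \<noteq> a$2" using False by (auto simp: vec2_eq)
    have "c - a = t *\<^sub>R (b - a)"
    proof (cases "b$1 \<noteq> a$1")
      case True
      then have d: "b$1 - a$1 \<noteq> 0" by simp
      have e: "(b$1 - a$1)*(c$2 - a$2) = (b$2 - a$2)*(c$1 - a$1)"
        using assms unfolding orient_def by simp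
      have t: "t = (c$1-a$1)/(b$1-a$1)" using True by (simp add: t_def)
      have 1: "c$1 - a$1 = t * (b$1 - a$1)" using d by (simp add: t)
      have 2: "c$2 - a$2 = t * (b$2 - a$2)" using d e
        by (simp add: t field_simps)
      show ?thesis using 1 2 by (simp add: vec2_eq)
    next
      case F: False
      then have "b$2 \<noteq> a$2" using ne by auto
      then have d: "b$2 - a$2 \<noteq> 0" by simp
      have e: "(b$1 - a$1)*(c$2 - a$2) = (b$2 - a$2)*(c$1 - a$1)"
        using assms unfolding orient_def by simp
      have t: "t = (c$2-a$2)/(b$2-a$2)" using F by (simp add: t_def)
      have "(b$2 - a$2)*(c$1 - a$1) = 0" using e F by simp
      then have "c$1 - a$1 = 0" using d by simp
      then have 1: "c$1 - a$1 = t * (b$1 - a$1)" using F by simp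
      have 2: "c$2 - a$2 = t * (b$2 - a$2)" using d by (simp add: t)
      show ?thesis using 1 2 by (simp add: vec2_eq)
    qed
    then show ?thesis by (subst collinear_lemma) blast
  qed
  ultimately show ?thesis using collinear_3[of b a c] by (simp add: NO_MATCH_def)
qed

lemma gp_orient:
  assumes "general_position P" "a \<in> P" "b \<in> P" "c \<in> P" "a \<noteq> b" "a \<noteq> c" "b \<noteq> c"
  shows "orient a b c \<noteq> 0"
  using assms orient0_collinear unfolding general_position_def by blast

lemma orient_seg:
  assumes "z \<in> closed_segment c d"
  shows "\<exists>u. 0 \<le> u \<and> u \<le> 1 \<and> orient a b z = (1-u)* orient a b c + u* orient a b d"
proof -
  obtain u where u: "0 \<le> u" "u \<le> 1" "z = (1 - u) *\<^sub>R c + u *\<^sub>R d"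
    using assms unfolding closed_segment_def by blast
  show ?thesis
    by (rule exI[of _ u]) (simp add: u orient_def algebra_simps)
qed

lemma orient_on_seg:
  assumes "z \<in> closed_segment a b" shows "orient a b z = 0"
  using orient_seg[OF assms, of a b] by auto

lemma sep_seg:
  assumes "orient a b c > 0" "orient a b d > 0"
  shows "closed_segment a b \<inter> closed_segment c d = {}"
proof (rule ccontr)
  assume "closed_segment a b \<inter> closed_segment c d \<noteq> {}"
  then obtain z where z: "z \<in> closed_segment a b" "z \<in> closed_segment c d" by blast
  obtain u where u: "0 \<le> u" "u \<le> 1" "orient a b z = (1-u)* orient a b c + u* orient a b d"
    using orient_seg[OF z(2)] by blast
  have "(1-u)* orient a b c + u* orient a b d > 0"
  proof (cases "u = 0")
    case True then show ?thesis using assms by simp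
  next
    case False
    then have "u* orient a b d > 0" using u assms by simp
    moreover have "(1-u)* orient a b c \<ge> 0" using u assms by simp
    ultimately show ?thesis by linarith
  qed
  then show False using orient_on_seg[OF z(1)] u by simp
qed

lemma orient_ident:
  "orient p0 b d * (m \<bullet> (c - p0)) = orient p0 b c * (m \<bullet> (d - p0)) + orient p0 c d * (m \<bullet> (b - p0))"
  by (simp add: orient_def inner2 algebra_simps)

lemma orient_trans:
  fixes m :: "real^2"
  assumes "m \<bullet> (c - p0) > 0" "m \<bullet> (b - p0) \<ge> 0" "m \<bullet> (d - p0) > 0"
    "orient p0 b c > 0" "orient p0 c d > 0"
  shows "orient p0 b d > 0"
proof -
  have "orient p0 b c * (m \<bullet> (d - p0)) > 0" using assms by simp
  moreover have "orient p0 c d * (m \<bullet> (b - p0)) \<ge> 0" using assms by simp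
  ultimately have "orient p0 b d * (m \<bullet> (c - p0)) > 0" using orient_ident[of p0 b d m c] by linarith
  then show ?thesis using assms(1) by (simp add: zero_less_mult_iff)
qed

definition rotv :: "real^2 \<Rightarrow> real^2" where
  "rotv v = vector [-(v$2), v$1]"

lemma orient_inner: "orient a b x = rotv (b - a) \<bullet> (x - a)"
  by (simp add: orient_def rotv_def inner2 algebra_simps)

lemma rotv_nz: "a \<noteq> b \<Longrightarrow> rotv (b - a) \<noteq> 0"
  by (auto simp: rotv_def vec2_eq)

lemma frontier_spt:
  fixes P :: "(real^2) set"
  assumes "finite P" "a \<in> P" "a \<in> frontier (convex hull P)"
  shows "\<exists>n. n \<noteq> 0 \<and> (\<forall>p\<in>P. n \<bullet> p \<le> n \<bullet> a)"
proof -
  define S where "S = convex hull P"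
  have cS: "convex S" unfolding S_def by simp
  have clS: "closed S" unfolding S_def
    by (simp add: assms(1) compact_convex_hull compact_imp_closed finite_imp_compact)
  have PS: "P \<subseteq> S" unfolding S_def by (simp add: hull_subset)
  show ?thesis
  proof (cases "aff_dim S < DIM(real^2)")
    case True
    then obtain n b where "n \<noteq> 0" "S \<subseteq> {x. n \<bullet> x = b}"
      by (rule aff_lowdim_subset_hyperplane)
    then have h: "\<forall>p\<in>P. n \<bullet> p = b" using PS by blast
    show ?thesis using h \<open>n \<noteq> 0\<close> assms(2) by (intro exI[of _ n]) auto
  next
    case False
    have le: "aff_dim S \<le> int DIM(real^2)" by (rule aff_dim_le_DIM)
    have "aff_dim S = int (DIM(real^2))" using False le by linarith
    then have "affine hull S = UNIV" by (rule affine_hull_UNIV)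
    then have ri: "rel_interior S = interior S" by (rule rel_interior_interior)
    have fr: "a \<in> closure S - interior S" using assms(3) unfolding S_def frontier_def .
    then have ca: "a \<in> closure S" and nint: "a \<notin> interior S" by blast+
    have nri: "a \<notin> rel_interior S" using ri nint by simp
    obtain n where n: "n \<noteq> 0" "\<And>y. y \<in> closure S \<Longrightarrow> n \<bullet> a \<le> n \<bullet> y"
        "\<And>y. y \<in> rel_interior S \<Longrightarrow> n \<bullet> a < n \<bullet> y"
      by (rule supporting_hyperplane_relative_frontier[OF cS ca nri]) blast
    have hn: "n \<bullet> a \<le> n \<bullet> p" if "p \<in> P" for p
    proof -
      have "p \<in> closure S" using that PS closure_subset[of S] by blast
      then show ?thesis by (rule n(2))
    qed
    have "\<forall>p\<in>P. (-n) \<bullet> p \<le> (-n) \<bullet> a" using hn by simp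
    then show ?thesis using n(1) by (intro exI[of _ "-n"]) simp
  qed
qed

definition supp :: "(real^2) set \<Rightarrow> real^2 \<Rightarrow> real^2 \<Rightarrow> bool" where
  "supp P a b \<longleftrightarrow> a \<in> P \<and> b \<in> P \<and> a \<noteq> b \<and> (\<forall>p\<in>P-{a,b}. orient a b p > 0)"

definition spt :: "(real^2) set \<Rightarrow> real^2 \<Rightarrow> bool" where
  "spt P a \<longleftrightarrow> a \<in> P \<and> (\<exists>n::real^2. n \<noteq> 0 \<and> (\<forall>p\<in>P. n \<bullet> p \<le> n \<bullet> a))"

lemma supp_ge: "supp P a b \<Longrightarrow> p \<in> P \<Longrightarrow> orient a b p \<ge> 0"
  unfolding supp_def by (cases "p = a \<or> p = b") (auto intro: less_imp_le)

lemma supp_spt: "supp P a b \<Longrightarrow> spt P b"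
proof -
  assume s: "supp P a b"
  have "\<forall>p\<in>P. (- rotv (b - a)) \<bullet> p \<le> (- rotv (b - a)) \<bullet> b"
  proof
    fix p assume "p \<in> P"
    then have "orient a b p \<ge> 0" using supp_ge[OF s] by blast
    moreover have "orient a b p = rotv (b - a) \<bullet> (p - a)" by (rule orient_inner)
    moreover have "rotv (b - a) \<bullet> (b - a) = 0" using orient_inner[of a b b] by simp
    ultimately show "(- rotv (b - a)) \<bullet> p \<le> (- rotv (b - a)) \<bullet> b"
      by (simp add: inner_diff_right)
  qed
  moreover have "rotv (b - a) \<noteq> 0" using s rotv_nz unfolding supp_def by auto
  ultimately show "spt P b" using s unfolding spt_def supp_def
    by (intro conjI exI[of _ "- rotv (b - a)"]) auto
qed

lemma supp_unique_l: "supp P a b \<Longrightarrow> supp P a' b \<Longrightarrow> a = a'"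
proof (rule ccontr)
  assume s: "supp P a b" "supp P a' b" "a \<noteq> a'"
  then have "orient a b a' > 0" "orient a' b a > 0" unfolding supp_def by auto
  moreover have "orient a' b a = - orient a b a'"
    by (simp add: orient_def algebra_simps)
  ultimately show False by linarith
qed

lemma supp_unique_r: "supp P a b \<Longrightarrow> supp P a b' \<Longrightarrow> b = b'"
proof (rule ccontr)
  assume s: "supp P a b" "supp P a b'" "b \<noteq> b'"
  then have "orient a b b' > 0" "orient a b' b > 0" unfolding supp_def by auto
  moreover have "orient a b' b = - orient a b b'" by (rule orient_swap)
  ultimately show False by linarith
qed

lemma supp_no2: "supp P a b \<Longrightarrow> supp P b a \<Longrightarrow> p \<in> P \<Longrightarrow> p \<noteq> a \<Longrightarrow> p \<noteq> b \<Longrightarrow> False"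
proof -
  assume s: "supp P a b" "supp P b a" "p \<in> P" "p \<noteq> a" "p \<noteq> b"
  then have "orient a b p > 0" "orient b a p > 0" unfolding supp_def by auto
  moreover have "orient b a p = - orient a b p" by (rule orient_swap1)
  ultimately show False by linarith
qed

lemma perp_cross:
  fixes n u v :: "real^2"
  assumes "n \<noteq> 0" "n \<bullet> u = 0" "n \<bullet> v = 0"
  shows "u$1 * v$2 - u$2 * v$1 = 0"
proof -
  have "n$1 * (u$1 * v$2 - u$2 * v$1) = (n \<bullet> u) * v$2 - (n \<bullet> v) * u$2"
    by (simp add: inner2 algebra_simps)
  moreover have "n$2 * (u$1 * v$2 - u$2 * v$1) = (n \<bullet> v) * u$1 - (n \<bullet> u) * v$1"
    by (simp add: inner2 algebra_simps)
  moreover have "n$1 \<noteq> 0 \<or> n$2 \<noteq> 0" using assms(1) by (auto simp: vec2_eq)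
  ultimately show ?thesis using assms by auto
qed

lemma ev_pos:
  fixes c k :: real
  assumes "c > 0"
  shows "eventually (\<lambda>e. c + e * k > 0) (at_right 0)"
proof -
  define b where "b = c / (\<bar>k\<bar> + 1)"
  have b0: "b > 0" using assms by (simp add: b_def)
  have bk: "b * \<bar>k\<bar> < c"
  proof -
    have "b * (\<bar>k\<bar> + 1) = c" by (simp add: b_def)
    then show ?thesis using b0 by (simp add: algebra_simps)
  qed
  have "\<forall>y>0. y < b \<longrightarrow> c + y * k > 0"
  proof (intro allI impI)
    fix y :: real assume y: "y > 0" "y < b"
    have "y * \<bar>k\<bar> \<le> b * \<bar>k\<bar>" using y by (intro mult_right_mono) auto
    moreover have "y * k \<ge> - (y * \<bar>k\<bar>)" using y
      by (cases "k \<ge> 0") (auto simp: abs_if)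
    ultimately show "c + y * k > 0" using bk by linarith
  qed
  then show ?thesis unfolding eventually_at_right_field using b0 by blast
qed

lemma strict_normal:
  fixes P :: "(real^2) set"
  assumes fin: "finite P" and gp: "general_position P" and aP: "a \<in> P"
    and n0: "n \<noteq> 0" and nle: "\<forall>p\<in>P. n \<bullet> p \<le> n \<bullet> a"
  shows "\<exists>m. \<forall>p\<in>P-{a}. m \<bullet> (p - a) > 0"
proof (cases "\<exists>q\<in>P-{a}. n \<bullet> (q - a) = 0")
  case False
  show ?thesis
  proof (intro exI[of _ "-n"] ballI)
    fix p assume p: "p \<in> P - {a}"
    then have "n \<bullet> (p - a) \<le> 0" using nle by (simp add: inner_diff_right)
    moreover have "n \<bullet> (p - a) \<noteq> 0" using False p by blast
    ultimately show "(-n) \<bullet> (p - a) > 0" by simp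
  qed
next
  case True
  then obtain q where q: "q \<in> P" "q \<noteq> a" "n \<bullet> (q - a) = 0" by blast
  have others: "n \<bullet> (p - a) < 0" if p: "p \<in> P" "p \<noteq> a" "p \<noteq> q" for p
  proof -
    have "n \<bullet> (p - a) \<le> 0" using nle p by (simp add: inner_diff_right)
    moreover have "n \<bullet> (p - a) \<noteq> 0"
    proof
      assume "n \<bullet> (p - a) = 0"
      then have "(q - a)$1 * (p - a)$2 - (q - a)$2 * (p - a)$1 = 0"
        using perp_cross[OF n0 q(3)] by blast
      then have "orient a q p = 0" by (simp add: orient_def)
      then show False using gp_orient[OF gp aP q(1) p(1)] q p by auto
    qed
    ultimately show ?thesis by linarith
  qed
  have "eventually (\<lambda>e. \<forall>p\<in>P-{a,q}. (- (n \<bullet> (p - a))) + e * ((q - a) \<bullet> (p - a)) > 0) (at_right 0)"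
  proof (rule eventually_ball_finite)
    show "finite (P - {a, q})" using fin by simp
    show "\<forall>p\<in>P - {a, q}. \<forall>\<^sub>F e in at_right 0. 0 < - (n \<bullet> (p - a)) + e * ((q - a) \<bullet> (p - a))"
    proof
      fix p assume "p \<in> P - {a, q}"
      then have "- (n \<bullet> (p - a)) > 0" using others by simp
      then show "\<forall>\<^sub>F e in at_right 0. 0 < - (n \<bullet> (p - a)) + e * ((q - a) \<bullet> (p - a))"
        by (rule ev_pos)
    qed
  qed
  moreover have "eventually (\<lambda>e::real. e > 0) (at_right 0)" by (rule eventually_at_right_less)
  ultimately have "eventually (\<lambda>e. e > 0 \<and> (\<forall>p\<in>P-{a,q}. (- (n \<bullet> (p - a))) + e * ((q - a) \<bullet> (p - a)) > 0)) (at_right 0)"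
    by (simp add: eventually_conj)
  moreover have "at_right (0::real) \<noteq> bot" by simp
  ultimately obtain e where e: "e > 0" "\<forall>p\<in>P-{a,q}. (- (n \<bullet> (p - a))) + e * ((q - a) \<bullet> (p - a)) > 0"
    using eventually_happens' by blast
  show ?thesis
  proof (intro exI[of _ "-n + e *\<^sub>R (q - a)"] ballI)
    fix p assume p: "p \<in> P - {a}"
    have eq: "(-n + e *\<^sub>R (q - a)) \<bullet> (p - a) = (- (n \<bullet> (p - a))) + e * ((q - a) \<bullet> (p - a))"
      by (simp add: inner_add_left inner_diff_left algebra_simps)
    show "(-n + e *\<^sub>R (q - a)) \<bullet> (p - a) > 0"
    proof (cases "p = q")
      case True
      have "(q - a) \<bullet> (q - a) > 0" using q(2) by simp
      then show ?thesis using eq True q(3) e(1) by simp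
    next
      case False
      then show ?thesis using eq e(2) p by auto
    qed
  qed
qed

lemma spt_succ:
  fixes P :: "(real^2) set"
  assumes fin: "finite P" and gp: "general_position P" and sp: "spt P a" and c2: "card P \<ge> 2"
  shows "\<exists>b. supp P a b"
proof -
  have aP: "a \<in> P" using sp by (simp add: spt_def)
  obtain n where n: "n \<noteq> 0" "\<forall>p\<in>P. n \<bullet> p \<le> n \<bullet> a" using sp by (auto simp: spt_def)
  obtain m where m: "\<forall>p\<in>P-{a}. m \<bullet> (p - a) > 0" using strict_normal[OF fin gp aP n] by blast
  define S where "S = P - {a}"
  define R where "R = {(c,b). c \<in> S \<and> b \<in> S \<and> orient a c b > 0}"
  have tr: "trans R"
  proof (rule transI)
    fix x y z assume "(x,y) \<in> R" "(y,z) \<in> R"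
    then have h: "x \<in> S" "y \<in> S" "z \<in> S" "orient a x y > 0" "orient a y z > 0"
      unfolding R_def by auto
    have m1: "m \<bullet> (y - a) > 0" "m \<bullet> (x - a) > 0" "m \<bullet> (z - a) > 0"
      using h(1-3) m unfolding S_def by auto
    have "orient a x z > 0"
      by (rule orient_trans[of m y a x z]) (use m1 h(4,5) in auto)
    then show "(x,z) \<in> R" using h unfolding R_def by auto
  qed
  have finR: "finite R"
  proof -
    have "R \<subseteq> S \<times> S" unfolding R_def by auto
    moreover have "finite S" using fin unfolding S_def by auto
    ultimately show ?thesis using finite_subset by blast
  qed
  have "acyclic R"
    unfolding acyclic_def trancl_id[OF tr] by (auto simp: R_def)
  then have wfR: "wf R" using finR finite_acyclic_wf by blast
  have "S \<noteq> {}"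
  proof
    assume "S = {}"
    then have "P \<subseteq> {a}" unfolding S_def by blast
    then have "card P \<le> card {a}" by (intro card_mono) simp_all
    then show False using c2 by simp
  qed
  then obtain x where x: "x \<in> S" by blast
  obtain b where b: "b \<in> S" "\<And>y. (y, b) \<in> R \<Longrightarrow> y \<notin> S"
    using wfE_min[OF wfR x] by blast
  have bP: "b \<in> P" "b \<noteq> a" using b(1) unfolding S_def by auto
  have pos: "orient a b p > 0" if p: "p \<in> P" "p \<noteq> a" "p \<noteq> b" for p
  proof -
    have pS: "p \<in> S" using p unfolding S_def by simp
    have "(p, b) \<notin> R" using b(2) pS by blast
    then have "\<not> orient a p b > 0" using pS b(1) unfolding R_def by simp
    moreover have "orient a p b \<noteq> 0"
      by (rule gp_orient[OF gp aP p(1) bP(1)]) (use p bP in auto)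
    ultimately have "orient a p b < 0" by linarith
    then show ?thesis using orient_swap[of a b p] by linarith
  qed
  have "supp P a b" unfolding supp_def using aP bP pos by auto
  then show ?thesis by blast
qed

lemma funpow_app: "(f^^m) ((f^^n) x) = (f^^(m+n)) x"
  by (simp add: funpow_add)

lemma funpow_cancel:
  assumes "inj_on f A" "f ` A \<subseteq> A" "y \<in> A" "z \<in> A" "(f^^i) y = (f^^i) z"
  shows "y = z"
  using assms(3-5)
proof (induction i arbitrary: y z)
  case 0 then show ?case by simp
next
  case (Suc i)
  have "(f^^i) (f y) = (f^^i) (f z)" using Suc.prems(3) by (simp add: funpow_Suc_right del: funpow.simps)
  moreover have "f y \<in> A" "f z \<in> A" using Suc.prems(1,2) assms(2) by auto
  ultimately have "f y = f z" using Suc.IH by blast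
  then show ?case using assms(1) Suc.prems(1,2) by (auto dest: inj_onD)
qed

lemma funpow_in: "f ` A \<subseteq> A \<Longrightarrow> x \<in> A \<Longrightarrow> (f^^i) x \<in> A"
  by (induction i) auto

lemma funpow_cycle:
  assumes fin: "finite A" and inj: "inj_on f A" and fA: "f ` A \<subseteq> A" and x: "x \<in> A"
  shows "\<exists>k>0. (f^^k) x = x"
proof -
  define g where "g i = (f^^i) x" for i
  have "g ` {0..card A} \<subseteq> A" unfolding g_def using funpow_in[OF fA x] by auto
  have "\<not> inj_on g {0..card A}"
  proof
    assume "inj_on g {0..card A}"
    then have "card (g ` {0..card A}) = card A + 1" by (simp add: card_image)
    moreover have "card (g ` {0..card A}) \<le> card A"
      using \<open>g ` {0..card A} \<subseteq> A\<close> fin card_mono by blast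
    ultimately show False by simp
  qed
  then obtain i j where ij: "i \<in> {0..card A}" "j \<in> {0..card A}" "i \<noteq> j" "g i = g j"
    unfolding inj_on_def by blast
  show ?thesis
  proof (cases "i < j")
    case True
    have "(f^^i) x = (f^^i) ((f^^(j - i)) x)"
      using ij(4) True funpow_app[where f=f and m=i and n="j - i" and x=x] unfolding g_def by simp
    then have "x = (f^^(j-i)) x"
      using funpow_cancel[OF inj fA x funpow_in[OF fA x]] by blast
    then show ?thesis using True by (intro exI[of _ "j - i"]) auto
  next
    case False
    then have "j < i" using ij(3) by simp
    have "(f^^j) x = (f^^j) ((f^^(i - j)) x)"
      using ij(4) \<open>j < i\<close> funpow_app[where f=f and m=j and n="i - j" and x=x] unfolding g_def by simp
    then have "x = (f^^(i-j)) x"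
      using funpow_cancel[OF inj fA x funpow_in[OF fA x]] by blast
    then show ?thesis using \<open>j < i\<close> by (intro exI[of _ "i - j"]) auto
  qed
qed

lemma orbit_small:
  fixes f :: "'a \<Rightarrow> 'a"
  assumes "(f^^i) x = (f^^j) x" "i < j"
  shows "range (\<lambda>l. (f^^l) x) \<subseteq> (\<lambda>l. (f^^l) x) ` {..<j}"
proof -
  have "(f^^l) x \<in> (\<lambda>l. (f^^l) x) ` {..<j}" for l
  proof (induction l rule: less_induct)
    case (less l)
    show ?case
    proof (cases "l < j")
      case True then show ?thesis by auto
    next
      case False
      have "(f^^l) x = (f^^(l - j)) ((f^^j) x)" using False funpow_app[where f=f and m="l - j" and n=j and x=x] by simp
      also have "\<dots> = (f^^(l - j)) ((f^^i) x)" using assms(1) by simp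
      also have "\<dots> = (f^^(l - j + i)) x" by (rule funpow_app)
      finally have "(f^^l) x = (f^^(l - j + i)) x" .
      moreover have "l - j + i < l" using False assms(2) by simp
      ultimately show ?thesis using less.IH by simp
    qed
  qed
  then show ?thesis by auto
qed

lemma orbit_covers:
  fixes P :: "(real^2) set"
  assumes fin: "finite P" and gp: "general_position P"
    and A: "A \<subseteq> P" and fA: "f ` A \<subseteq> A" and sA: "\<forall>a\<in>A. supp P a (f a)"
    and x: "x \<in> A" and k: "k > 0" "(f^^k) x = x"
    and hP: "h \<in> P" and n: "n \<noteq> 0" "\<forall>p\<in>P. n \<bullet> p \<le> n \<bullet> h"
  shows "h \<in> range (\<lambda>i. (f^^i) x)"
proof (rule ccontr)
  assume hOrb: "h \<notin> range (\<lambda>i. (f^^i) x)"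
  define Orb where "Orb = range (\<lambda>i. (f^^i) x)"
  have hOrb': "h \<notin> Orb" using hOrb unfolding Orb_def .
  have OrbA: "Orb \<subseteq> A" unfolding Orb_def using funpow_in[OF fA x] by blast
  have finOrb: "finite Orb" by (rule finite_subset[OF _ fin]) (use OrbA A in blast)
  have ne: "Orb \<noteq> {}" unfolding Orb_def by simp
  define M where "M = Max ((\<lambda>y. n \<bullet> y) ` Orb)"
  have Mi: "M \<in> (\<lambda>y. n \<bullet> y) ` Orb" unfolding M_def
    by (rule Max_in) (use finOrb ne in simp_all)
  then obtain c where c: "c \<in> Orb" "n \<bullet> c = M" by (rule imageE) simp
  have cmax: "n \<bullet> y \<le> n \<bullet> c" if "y \<in> Orb" for y
  proof -
    have "n \<bullet> y \<le> M" unfolding M_def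
      by (rule Max_ge) (use finOrb that in simp_all)
    then show ?thesis using c(2) by simp
  qed
  obtain i where ci: "c = (f^^i) x" using c(1) unfolding Orb_def by auto
  define cn where "cn = (f^^(Suc i)) x"
  define cp where "cp = (f^^(i + k - 1)) x"
  have cnf: "cn = f c" unfolding cn_def ci by simp
  have "f cp = (f^^(Suc (i + k - 1))) x" unfolding cp_def by simp
  also have "Suc (i + k - 1) = i + k" using k(1) by simp
  also have "(f^^(i + k)) x = (f^^i) ((f^^k) x)" by (simp add: funpow_app)
  finally have cpf: "f cp = c" using k(2) ci by simp
  have cnOrb: "cn \<in> Orb" "cp \<in> Orb" unfolding Orb_def cn_def cp_def by (rule rangeI)+
  have cA: "c \<in> A" "cp \<in> A" using OrbA c(1) cnOrb by blast+
  have s1: "supp P c cn" using sA cA(1) cnf by simp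
  have "supp P cp (f cp)" using sA cA(2) by blast
  then have s2: "supp P cp c" using cpf by simp
  have hne: "h \<noteq> c" "h \<noteq> cn" "h \<noteq> cp" using hOrb' c(1) cnOrb by auto
  have cP: "c \<in> P" "cn \<in> P" "cp \<in> P" "cp \<noteq> c" using s1 s2 unfolding supp_def by simp_all
  have "cp \<noteq> cn"
  proof
    assume "cp = cn"
    then have "supp P cn c" using s2 by simp
    then show False using supp_no2[OF s1 _ hP hne(1) hne(2)] by blast
  qed
  have o1: "orient c cn h > 0" using s1 hP hne unfolding supp_def by simp
  have "orient cp c h > 0" using s2 hP hne unfolding supp_def by simp
  then have o2: "orient c h cp > 0" using orient_rot[of cp c h] orient_rot[of c h cp] by simp
  have o3: "orient c cn cp > 0" using s1 cP \<open>cp \<noteq> cn\<close> unfolding supp_def by simp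
  have i1: "n \<bullet> (h - c) \<ge> 0" using n(2) cP(1) by (simp add: inner_diff_right)
  have i2: "n \<bullet> (cn - c) \<le> 0" using cmax[OF cnOrb(1)] by (simp add: inner_diff_right)
  have i3: "n \<bullet> (cp - c) \<le> 0" using cmax[OF cnOrb(2)] by (simp add: inner_diff_right)
  have idn: "orient c cn cp * (n \<bullet> (h - c)) = orient c cn h * (n \<bullet> (cp - c)) + orient c h cp * (n \<bullet> (cn - c))"
    by (rule orient_ident)
  have "orient c cn cp * (n \<bullet> (h - c)) \<ge> 0" using o3 i1 by simp
  moreover have "orient c cn h * (n \<bullet> (cp - c)) \<le> 0" using o1 i3 by (simp add: mult_nonneg_nonpos)
  moreover have "orient c h cp * (n \<bullet> (cn - c)) \<le> 0" using o2 i2 by (simp add: mult_nonneg_nonpos)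
  ultimately have "orient c cn h * (n \<bullet> (cp - c)) = 0" "orient c h cp * (n \<bullet> (cn - c)) = 0"
    using idn by linarith+
  then have "n \<bullet> (cp - c) = 0" "n \<bullet> (cn - c) = 0" using o1 o2 by auto
  then have "(cn - c)$1 * (cp - c)$2 - (cn - c)$2 * (cp - c)$1 = 0"
    using perp_cross[OF n(1)] by blast
  then have "orient c cn cp = 0" by (simp add: orient_def)
  then show False using o3 by simp
qed

lemma chain_convex:
  fixes a :: "nat \<Rightarrow> real^2"
  assumes D: "\<And>i j. i < N \<Longrightarrow> j < N \<Longrightarrow> i \<noteq> j \<Longrightarrow> a i \<noteq> a j"
    and S: "\<And>i. Suc i < N \<Longrightarrow> supp P (a i) (a (Suc i))"
    and ij: "i < j"
  shows "j < k \<Longrightarrow> k < N \<Longrightarrow> orient (a i) (a j) (a k) > 0"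
proof (induction k)
  case 0 then show ?case by simp
next
  case (Suc k)
  have aP: "a l \<in> P" if "l < N" for l
  proof (cases "Suc l < N")
    case True then show ?thesis using S[OF True] unfolding supp_def by simp
  next
    case False
    then have "l = Suc (l - 1)" "Suc (l - 1) < N" using that Suc.prems by auto
    then show ?thesis using S[of "l - 1"] unfolding supp_def by metis
  qed
  show ?case
  proof (cases "k = j")
    case True
    have s: "supp P (a j) (a (Suc j))" using S Suc.prems True by simp
    have "a i \<noteq> a j" "a i \<noteq> a (Suc j)" using D ij Suc.prems True by auto
    moreover have "a i \<in> P" using aP Suc.prems ij True by simp
    ultimately have "orient (a j) (a (Suc j)) (a i) > 0" using s unfolding supp_def by simp
    then show ?thesis using True orient_rot[of "a i" "a j" "a (Suc j)"] by simp
  next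
    case False
    then have jk: "j < k" using Suc.prems by simp
    have IH: "orient (a i) (a j) (a k) > 0" using Suc.IH jk Suc.prems by simp
    define m where "m = rotv (a (Suc i) - a i)"
    have sI: "supp P (a i) (a (Suc i))" using S ij jk Suc.prems by simp
    have mo: "m \<bullet> (z - a i) = orient (a i) (a (Suc i)) z" for z
      unfolding m_def by (simp add: orient_inner)
    have mpos: "m \<bullet> (a l - a i) > 0" if "l < N" "l \<noteq> i" "l \<noteq> Suc i" for l
    proof -
      have "a l \<noteq> a i" "a l \<noteq> a (Suc i)" using D that ij jk Suc.prems by auto
      moreover have "a l \<in> P" using aP that by simp
      ultimately show ?thesis unfolding mo using sI unfolding supp_def by simp
    qed
    have m1: "m \<bullet> (a k - a i) > 0" using mpos jk ij Suc.prems by simp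
    have m2: "m \<bullet> (a j - a i) \<ge> 0"
    proof (cases "j = Suc i")
      case True then show ?thesis unfolding mo by simp
    next
      case False then show ?thesis using mpos[of j] ij jk Suc.prems by simp
    qed
    have m3: "m \<bullet> (a (Suc k) - a i) > 0" using mpos jk ij Suc.prems by simp
    have sk: "supp P (a k) (a (Suc k))" using S Suc.prems by simp
    have "a i \<noteq> a k" "a i \<noteq> a (Suc k)" using D ij jk Suc.prems by auto
    moreover have "a i \<in> P" using aP ij jk Suc.prems by simp
    ultimately have "orient (a k) (a (Suc k)) (a i) > 0" using sk unfolding supp_def by simp
    then have o2: "orient (a i) (a k) (a (Suc k)) > 0"
      using orient_rot[of "a i" "a k" "a (Suc k)"] by simp
    show ?thesis by (rule orient_trans[OF m1 m2 m3 IH o2])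
  qed
qed

lemma chain_disj:
  fixes a :: "nat \<Rightarrow> real^2"
  assumes conv: "\<And>i j k. i < j \<Longrightarrow> j < k \<Longrightarrow> k < N \<Longrightarrow> orient (a i) (a j) (a k) > 0"
    and o: "i < j" "k < l" "i < k" "l < N" "j < N" "j \<noteq> k" "j \<noteq> l" "\<not> (k < j \<and> j < l)"
  shows "closed_segment (a i) (a j) \<inter> closed_segment (a k) (a l) = {}"
proof (cases "j < k")
  case True
  show ?thesis by (rule sep_seg) (use conv o True in auto)
next
  case False
  then have kj: "k < j" "l < j" using o by auto
  have "orient (a k) (a l) (a j) > 0" using conv o kj by simp
  moreover have "orient (a k) (a l) (a i) > 0"
    using conv[of i k l] o kj orient_rot[of "a i" "a k" "a l"] by simp
  ultimately have "closed_segment (a k) (a l) \<inter> closed_segment (a j) (a i) = {}"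
    by (rule sep_seg)
  then show ?thesis by (simp add: closed_segment_commute Int_commute)
qed

definition interl :: "nat \<Rightarrow> nat \<Rightarrow> nat \<Rightarrow> nat \<Rightarrow> bool" where
  "interl i j k l \<longleftrightarrow> ((i < k) \<noteq> (j < k)) \<noteq> ((i < l) \<noteq> (j < l))"

lemma chain_disj_gen:
  fixes a :: "nat \<Rightarrow> real^2"
  assumes conv: "\<And>i j k. i < j \<Longrightarrow> j < k \<Longrightarrow> k < N \<Longrightarrow> orient (a i) (a j) (a k) > 0"
    and b: "i < N" "j < N" "k < N" "l < N"
    and d: "i \<noteq> j" "i \<noteq> k" "i \<noteq> l" "j \<noteq> k" "j \<noteq> l" "k \<noteq> l"
    and ni: "\<not> interl i j k l"
  shows "closed_segment (a i) (a j) \<inter> closed_segment (a k) (a l) = {}"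
proof -
  define i' where "i' = min i j"
  define j' where "j' = max i j"
  define k' where "k' = min k l"
  define l' where "l' = max k l"
  have e1: "closed_segment (a i) (a j) = closed_segment (a i') (a j')"
    unfolding i'_def j'_def by (cases "i \<le> j") (auto simp: closed_segment_commute min_def max_def)
  have e2: "closed_segment (a k) (a l) = closed_segment (a k') (a l')"
    unfolding k'_def l'_def by (cases "k \<le> l") (auto simp: closed_segment_commute min_def max_def)
  have o: "i' < j'" "k' < l'" "j' < N" "l' < N" "i' \<noteq> k'" "j' \<noteq> k'" "j' \<noteq> l'" "i' \<noteq> l'"
    using b d unfolding i'_def j'_def k'_def l'_def by (auto simp: min_def max_def)
  have ni': "(i' < k' \<and> k' < j') = (i' < l' \<and> l' < j')"
    using ni d unfolding interl_def i'_def j'_def k'_def l'_def by (auto simp: min_def max_def)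
  show ?thesis
  proof (cases "i' < k'")
    case True
    have "closed_segment (a i') (a j') \<inter> closed_segment (a k') (a l') = {}"
      by (rule chain_disj[OF conv]) (use o ni' True in auto)
    then show ?thesis unfolding e1 e2 .
  next
    case False
    then have "k' < i'" using o by simp
    have "closed_segment (a k') (a l') \<inter> closed_segment (a i') (a j') = {}"
      by (rule chain_disj[OF conv]) (use o ni' \<open>k' < i'\<close> in auto)
    then show ?thesis unfolding e1 e2 by blast
  qed
qed

lemma div2_cmp:
  fixes x y :: nat
  assumes "x div 2 \<noteq> y div 2"
  shows "(x < y) = (x div 2 < y div 2)"
proof
  assume "x < y"
  then have "x div 2 \<le> y div 2" by (simp add: div_le_mono)
  then show "x div 2 < y div 2" using assms by simp
next
  assume h: "x div 2 < y div 2"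
  show "x < y"
  proof (rule ccontr)
    assume "\<not> x < y"
    then have "y div 2 \<le> x div 2" by (simp add: div_le_mono)
    then show False using h by simp
  qed
qed

lemma blocks:
  fixes i j k l :: nat
  assumes "i < 8" "j < 8" "k < 8" "l < 8"
    "i div 2 \<noteq> j div 2" "i div 2 \<noteq> k div 2" "i div 2 \<noteq> l div 2"
    "j div 2 \<noteq> k div 2" "j div 2 \<noteq> l div 2" "k div 2 \<noteq> l div 2"
    "interl i j k l"
  shows "(i div 2 = 0 \<and> j div 2 = 2) \<or> (i div 2 = 2 \<and> j div 2 = 0) \<or>
         (k div 2 = 0 \<and> l div 2 = 2) \<or> (k div 2 = 2 \<and> l div 2 = 0)"
proof -
  have I: "((i div 2 < k div 2) \<noteq> (j div 2 < k div 2)) \<noteq> ((i div 2 < l div 2) \<noteq> (j div 2 < l div 2))"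
    using assms(11) unfolding interl_def
    using div2_cmp[OF assms(6)] div2_cmp[OF assms(8)] div2_cmp[OF assms(7)] div2_cmp[OF assms(9)]
    by simp
  have r: "x div 2 = 0 \<or> x div 2 = 1 \<or> x div 2 = 2 \<or> x div 2 = 3" if "x < 8" for x :: nat
    using that by linarith
  show ?thesis
    using r[OF assms(1)] r[OF assms(2)] r[OF assms(3)] r[OF assms(4)] I assms(5-10)
    by (elim disjE) simp_all
qed

lemma walk_len2:
  assumes "walk_between V E x y ys" "x \<noteq> y" shows "length ys \<ge> 2"
proof (cases ys)
  case Nil then show ?thesis using assms unfolding walk_between_def is_walk_def by simp
next
  case (Cons z zs)
  show ?thesis
  proof (cases zs)
    case Nil
    then show ?thesis using assms Cons unfolding walk_between_def by auto
  next
    case (Cons z' zs')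
    then show ?thesis using \<open>ys = z # zs\<close> by simp
  qed
qed

lemma walk_len3:
  assumes w: "walk_between V E x y ys" and "x \<noteq> y" "\<not> E x y" shows "length ys \<ge> 3"
proof (rule ccontr)
  assume "\<not> length ys \<ge> 3"
  then have "length ys = 2" using walk_len2[OF assms(1,2)] by simp
  then obtain u v where ys: "ys = [u, v]"
    by (metis One_nat_def Suc_1 length_0_conv length_Suc_conv)
  have "u = x" "v = y" using w ys unfolding walk_between_def by simp_all
  moreover have "E (ys ! 0) (ys ! Suc 0)"
    using w unfolding walk_between_def is_walk_def ys by fastforce
  ultimately show False using ys assms(3) by auto
qed

lemma vis_adj:
  assumes "x \<in> V" "y \<in> V" "x \<noteq> y" "E x y"
  shows "mutually_visible V E U x y"
proof -
  have wk: "walk_between V E x y [x, y]"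
    unfolding walk_between_def is_walk_def
  proof (intro conjI allI impI)
    fix i assume "Suc i < length [x, y]"
    then have "i = 0" by simp
    then show "E ([x, y] ! i) ([x, y] ! Suc i)" using assms by simp
  qed (use assms in auto)
  have "shortest_path V E x y [x, y]"
  proof -
    have "length [x,y] \<le> length ys" if "walk_between V E x y ys" for ys
      using walk_len2[OF that assms(3)] by (simp add: eval_nat_numeral)
    then show ?thesis unfolding shortest_path_def using wk by blast
  qed
  then show ?thesis unfolding mutually_visible_def by (intro exI[of _ "[x, y]"]) simp
qed

lemma vis_mid:
  assumes "x \<in> V" "y \<in> V" "w \<in> V" "x \<noteq> y" "\<not> E x y" "E x w" "E w y" "w \<notin> U"
  shows "mutually_visible V E U x y"
proof -
  have wk: "walk_between V E x y [x, w, y]"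
    unfolding walk_between_def is_walk_def
  proof (intro conjI allI impI)
    fix i assume "Suc i < length [x, w, y]"
    then have "i = 0 \<or> i = 1" by auto
    then show "E ([x, w, y] ! i) ([x, w, y] ! Suc i)" using assms by auto
  qed (use assms in auto)
  have "shortest_path V E x y [x, w, y]"
  proof -
    have "length [x,w,y] \<le> length ys" if "walk_between V E x y ys" for ys
      using walk_len3[OF that assms(4,5)] by (simp add: eval_nat_numeral)
    then show ?thesis unfolding shortest_path_def using wk by blast
  qed
  then show ?thesis unfolding mutually_visible_def using assms(8)
    by (intro exI[of _ "[x, w, y]"]) simp
qed

lemma edge_disj:
  assumes "supp P u v" "p \<in> P" "q \<in> P" "p \<noteq> u" "p \<noteq> v" "q \<noteq> u" "q \<noteq> v"
  shows "closed_segment u v \<inter> closed_segment p q = {}"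
  by (rule sep_seg) (use assms in \<open>simp_all add: supp_def\<close>)

theorem lemma17:
  fixes P :: "(real^2) set"
  assumes "finite P"
    and "general_position P"
    and "card (P \<inter> frontier (convex hull P)) \<in> {8, 9}"
  shows "mu (seg_vertices P) seg_adj \<ge> (card P choose 2) - 8"
proof -
  note fin = assms(1) and gp = assms(2)
  define H where "H = P \<inter> frontier (convex hull P)"
  have cH: "card H \<ge> 8" using assms(3) unfolding H_def by auto
  have HP: "H \<subseteq> P" unfolding H_def by blast
  have finH: "finite H" using finite_subset[OF HP fin] .
  define A where "A = {a. spt P a}"
  have AP: "A \<subseteq> P" unfolding A_def spt_def by blast
  have finA: "finite A" using finite_subset[OF AP fin] .
  have HA: "H \<subseteq> A"
  proof
    fix h assume "h \<in> H"
    then have "h \<in> P" "h \<in> frontier (convex hull P)" unfolding H_def by auto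
    then show "h \<in> A" using frontier_spt[OF fin] unfolding A_def spt_def by blast
  qed
  have cP: "card P \<ge> 8" using card_mono[OF fin HP] cH by linarith
  define f where "f a = (SOME b. supp P a b)" for a
  have sA: "\<forall>a\<in>A. supp P a (f a)"
  proof
    fix a assume "a \<in> A"
    then have "\<exists>b. supp P a b" using spt_succ[OF fin gp] cP unfolding A_def by simp
    then show "supp P a (f a)" unfolding f_def by (rule someI_ex)
  qed
  have fA: "f ` A \<subseteq> A" using sA supp_spt unfolding A_def by blast
  have inj: "inj_on f A"
  proof (rule inj_onI)
    fix u v assume "u \<in> A" "v \<in> A" "f u = f v"
    then have "supp P u (f u)" "supp P v (f u)" using sA by auto
    then show "u = v" by (rule supp_unique_l)
  qed
  obtain x0 where x0H: "x0 \<in> H" using cH by fastforce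
  have x0: "x0 \<in> A" using x0H HA by blast
  obtain k where k: "k > 0" "(f^^k) x0 = x0" using funpow_cycle[OF finA inj fA x0] by blast
  have cover: "A \<subseteq> range (\<lambda>i. (f^^i) x0)"
  proof
    fix h assume "h \<in> A"
    then have "h \<in> P" and "\<exists>n::real^2. n \<noteq> 0 \<and> (\<forall>p\<in>P. n \<bullet> p \<le> n \<bullet> h)"
      unfolding A_def spt_def by auto
    then obtain n where n: "n \<noteq> 0" "\<forall>p\<in>P. n \<bullet> p \<le> n \<bullet> h" by blast
    show "h \<in> range (\<lambda>i. (f^^i) x0)"
      by (rule orbit_covers[OF fin gp AP fA sA x0 k \<open>h \<in> P\<close> n])
  qed
  define a where "a i = (f^^i) x0" for i
  have aA: "a i \<in> A" for i unfolding a_def by (rule funpow_in[OF fA x0])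
  have aP: "a i \<in> P" for i using aA AP by blast
  have sa: "supp P (a i) (a (Suc i))" for i
    using sA aA[of i] unfolding a_def by simp
  have D0: "a i \<noteq> a j" if "i < j" "j < 8" for i j
  proof
    assume "a i = a j"
    then have "range (\<lambda>l. (f^^l) x0) \<subseteq> (\<lambda>l. (f^^l) x0) ` {..<j}"
      using orbit_small[where f=f and i=i and x=x0 and j=j] that unfolding a_def by blast
    then have "H \<subseteq> (\<lambda>l. (f^^l) x0) ` {..<j}" using HA cover by blast
    then have "card H \<le> card ((\<lambda>l. (f^^l) x0) ` {..<j})" by (intro card_mono) auto
    also have "\<dots> \<le> card {..<j}" by (rule card_image_le) simp
    finally show False using that cH by simp
  qed
  have D: "a i \<noteq> a j" if "i < 8" "j < 8" "i \<noteq> j" for i j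
  proof (cases "i < j")
    case True then show ?thesis using D0 that by blast
  next
    case False then have "j < i" using that by simp
    then show ?thesis using D0[of j i] that by metis
  qed
  have conv: "orient (a i) (a j) (a k) > 0" if "i < j" "j < k" "k < 8" for i j k
    by (rule chain_convex[of 8 a P i j k]) (use D sa that in auto)
  define sg where "sg i j = closed_segment (a i) (a j)" for i j
  define W where "W = {sg 0 1, sg 2 3, sg 4 5, sg 6 7, sg 0 4, sg 0 5, sg 1 4, sg 1 5}"
  define V where "V = seg_vertices P"
  define U where "U = V - W"
  have sgV: "sg i j \<in> V" if "i < 8" "j < 8" "i \<noteq> j" for i j
    unfolding sg_def V_def seg_vertices_def using aP D[OF that] by blast
  have WV: "W \<subseteq> V" unfolding W_def using sgV by simp
  have edge: "sg i (Suc i) \<inter> closed_segment p q = {}"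
    if "p \<in> P" "q \<in> P" "p \<noteq> a i" "p \<noteq> a (Suc i)" "q \<noteq> a i" "q \<noteq> a (Suc i)" for i p q
    unfolding sg_def by (rule edge_disj[OF sa that])
  have key: "\<exists>w\<in>W. x \<inter> w = {} \<and> w \<inter> y = {}"
    if xy: "x \<in> U" "y \<in> U" "x \<noteq> y" "x \<inter> y \<noteq> {}" for x y
  proof (rule ccontr)
    assume nw: "\<not> (\<exists>w\<in>W. x \<inter> w = {} \<and> w \<inter> y = {})"
    have "x \<in> V" "y \<in> V" using xy unfolding U_def by auto
    then obtain p1 p2 p3 p4 where p: "x = closed_segment p1 p2" "p1 \<in> P" "p2 \<in> P" "p1 \<noteq> p2"
      "y = closed_segment p3 p4" "p3 \<in> P" "p4 \<in> P" "p3 \<noteq> p4"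
      unfolding V_def seg_vertices_def by blast
    define T where "T = set [p1, p2, p3, p4]"
    have finT: "finite T" unfolding T_def by simp
    have hit: "\<exists>i<8. i div 2 = t \<and> a i \<in> T" if "t < 4" for t
    proof (rule ccontr)
      assume "\<not> (\<exists>i<8. i div 2 = t \<and> a i \<in> T)"
      then have n1: "a (2*t) \<notin> T" "a (Suc (2*t)) \<notin> T" using that by auto
      have "sg (2*t) (Suc (2*t)) \<inter> x = {}" unfolding p(1)
        by (rule edge) (use p n1 in \<open>auto simp: T_def\<close>)
      moreover have "sg (2*t) (Suc (2*t)) \<inter> y = {}" unfolding p(5)
        by (rule edge) (use p n1 in \<open>auto simp: T_def\<close>)
      moreover have "sg (2*t) (Suc (2*t)) \<in> W"
      proof -
        have "t = 0 \<or> t = 1 \<or> t = 2 \<or> t = 3" using that by linarith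
        then show ?thesis unfolding W_def by (elim disjE) (simp_all add: eval_nat_numeral)
      qed
      ultimately show False using nw by blast
    qed
    define Ix where "Ix = {i. i < 8 \<and> a i \<in> T}"
    have finIx: "finite Ix" unfolding Ix_def by simp
    have injA: "inj_on a Ix" unfolding Ix_def using D by (auto intro: inj_onI)
    have aIx: "a ` Ix \<subseteq> T" unfolding Ix_def by blast
    have cT: "card T \<le> 4" unfolding T_def using card_length[of "[p1, p2, p3, p4]"] by simp
    have cIx: "card Ix \<le> 4"
      using card_image[OF injA] card_mono[OF finT aIx] cT by linarith
    have sub4: "{..<4} \<subseteq> (\<lambda>i. i div 2) ` Ix"
    proof
      fix t assume "t \<in> {..<(4::nat)}"
      then obtain i where "i < 8" "i div 2 = t" "a i \<in> T" using hit by blast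
      then show "t \<in> (\<lambda>i. i div 2) ` Ix" unfolding Ix_def by blast
    qed
    have "card {..<(4::nat)} \<le> card ((\<lambda>i. i div 2) ` Ix)"
      by (rule card_mono[OF _ sub4]) (use finIx in simp)
    then have c4: "4 \<le> card ((\<lambda>i. i div 2) ` Ix)" by simp
    have cimg: "card ((\<lambda>i. i div 2) ` Ix) \<le> card Ix" by (rule card_image_le[OF finIx])
    have cIx4: "card Ix = 4" using c4 cimg cIx by linarith
    have "card ((\<lambda>i. i div 2) ` Ix) = card Ix" using c4 cimg cIx by linarith
    then have injD: "inj_on (\<lambda>i. i div 2) Ix"
      using inj_on_iff_eq_card[OF finIx, of "\<lambda>i. i div 2"] by simp
    have "card (a ` Ix) = 4" using card_image[OF injA] cIx4 by simp
    moreover have "card (a ` Ix) \<le> card T" by (rule card_mono[OF finT aIx])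
    ultimately have "card (a ` Ix) = card T" using cT by linarith
    then have aIxT: "a ` Ix = T" by (rule card_subset_eq[OF finT aIx])
    have "card T = 4" using aIxT \<open>card (a ` Ix) = 4\<close> by simp
    then have dist: "distinct [p1, p2, p3, p4]" unfolding T_def by (intro card_distinct) simp
    have "p1 \<in> T" "p2 \<in> T" "p3 \<in> T" "p4 \<in> T" unfolding T_def by simp_all
    then obtain i j k l where ijkl: "i \<in> Ix" "j \<in> Ix" "k \<in> Ix" "l \<in> Ix"
      "p1 = a i" "p2 = a j" "p3 = a k" "p4 = a l"
      unfolding aIxT[symmetric] by blast
    have lt: "i < 8" "j < 8" "k < 8" "l < 8" using ijkl unfolding Ix_def by auto
    have neq: "i \<noteq> j" "i \<noteq> k" "i \<noteq> l" "j \<noteq> k" "j \<noteq> l" "k \<noteq> l"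
      using dist ijkl by auto
    have bl0: "u div 2 \<noteq> v div 2" if "u \<in> Ix" "v \<in> Ix" "u \<noteq> v" for u v
      using inj_onD[OF injD _ that(1,2)] that(3) by blast
    have bl: "i div 2 \<noteq> j div 2" "i div 2 \<noteq> k div 2" "i div 2 \<noteq> l div 2"
      "j div 2 \<noteq> k div 2" "j div 2 \<noteq> l div 2" "k div 2 \<noteq> l div 2"
      using bl0 neq ijkl(1-4) by simp_all
    have xs: "x = sg i j" "y = sg k l" unfolding sg_def using p ijkl by simp_all
    show False
    proof (cases "interl i j k l")
      case True
      have inW: "sg u v \<in> W" if "u div 2 = 0" "v div 2 = 2" for u v
      proof -
        have "u = 0 \<or> u = 1" "v = 4 \<or> v = 5" using that by auto
        then show ?thesis unfolding W_def by auto
      qed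
      have sgc: "sg u v = sg v u" for u v unfolding sg_def by (rule closed_segment_commute)
      have "x \<in> W \<or> y \<in> W"
        using blocks[OF lt bl True]
      proof (elim disjE conjE)
        assume "i div 2 = 0" "j div 2 = 2"
        then show ?thesis using inW xs by simp
      next
        assume "i div 2 = 2" "j div 2 = 0"
        then have "sg j i \<in> W" using inW by simp
        then show ?thesis using sgc xs by simp
      next
        assume "k div 2 = 0" "l div 2 = 2"
        then show ?thesis using inW xs by simp
      next
        assume "k div 2 = 2" "l div 2 = 0"
        then have "sg l k \<in> W" using inW by simp
        then show ?thesis using sgc xs by simp
      qed
      then show False using xy unfolding U_def by blast
    next
      case False
      have "sg i j \<inter> sg k l = {}" unfolding sg_def
        by (rule chain_disj_gen[of 8 a]) (use conv lt neq False in auto)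
      then show False using xy xs by simp
    qed
  qed
  have mvs: "mutual_visibility_set V seg_adj U"
    unfolding mutual_visibility_set_def
  proof (intro conjI ballI impI)
    show "U \<subseteq> V" unfolding U_def by blast
    fix x y assume xy: "x \<in> U" "y \<in> U" "x \<noteq> y"
    have xyV: "x \<in> V" "y \<in> V" using xy unfolding U_def by auto
    show "mutually_visible V seg_adj U x y"
    proof (cases "x \<inter> y = {}")
      case True
      then have "seg_adj x y" by (simp add: seg_adj_def)
      then show ?thesis by (rule vis_adj[OF xyV xy(3)])
    next
      case False
      then obtain w where w: "w \<in> W" "x \<inter> w = {}" "w \<inter> y = {}" using key xy by blast
      have "w \<in> V" "w \<notin> U" using w WV unfolding U_def by auto
      then show ?thesis
        by (intro vis_mid[OF xyV _ xy(3)]) (simp_all add: seg_adj_def w False)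
    qed
  qed
  define B where "B = {S. S \<subseteq> P \<and> card S = 2}"
  have VB: "V = (\<lambda>S. convex hull S) ` B"
  proof
    show "V \<subseteq> (\<lambda>S. convex hull S) ` B"
    proof
      fix v assume "v \<in> V"
      then obtain p q where pq: "v = closed_segment p q" "p \<in> P" "q \<in> P" "p \<noteq> q"
        unfolding V_def seg_vertices_def by blast
      have v: "v = convex hull {p, q}" by (simp only: pq(1) segment_convex_hull)
      have "{p, q} \<in> B" unfolding B_def using pq(2-4) by simp
      then show "v \<in> (\<lambda>S. convex hull S) ` B" using v by (rule rev_image_eqI)
    qed
    show "(\<lambda>S. convex hull S) ` B \<subseteq> V"
    proof
      fix v assume "v \<in> (\<lambda>S. convex hull S) ` B"
      then obtain S where S: "S \<in> B" "v = convex hull S" by (rule imageE) simp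
      then have S2: "S \<subseteq> P" "card S = 2" unfolding B_def by simp_all
      then obtain p q where pq: "S = {p, q}" "p \<noteq> q" by (meson card_2_iff)
      have "v = closed_segment p q" by (simp only: S(2) pq(1) segment_convex_hull)
      moreover have "p \<in> P" "q \<in> P" using S2(1) pq(1) by simp_all
      ultimately show "v \<in> V" unfolding V_def seg_vertices_def using pq(2) by blast
    qed
  qed
  have injB: "inj_on (\<lambda>S. convex hull S) B"
  proof (rule inj_onI)
    fix S1 S2 assume "S1 \<in> B" "S2 \<in> B" and eq: "convex hull S1 = convex hull S2"
    then have "card S1 = 2" "card S2 = 2" unfolding B_def by simp_all
    then obtain p q r s where pq: "S1 = {p, q}" and rs: "S2 = {r, s}" by (meson card_2_iff)
    have "closed_segment p q = closed_segment r s"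
      by (simp only: segment_convex_hull pq[symmetric] rs[symmetric] eq)
    then show "S1 = S2" unfolding pq rs by (rule iffD1[OF closed_segment_eq])
  qed
  have cV1: "card V = card B" unfolding VB by (rule card_image[OF injB])
  have cV2: "card B = card P choose 2" unfolding B_def by (rule n_subsets[OF fin])
  have cardV: "card V = card P choose 2" using cV1 cV2 by simp
  have finV: "finite V"
  proof -
    have "B \<subseteq> Pow P" unfolding B_def by blast
    then have "finite B" using fin by (meson finite_Pow_iff finite_subset)
    then show ?thesis unfolding VB by (rule finite_imageI)
  qed
  have cW: "card W \<le> 8"
  proof -
    have "W = set [sg 0 1, sg 2 3, sg 4 5, sg 6 7, sg 0 4, sg 0 5, sg 1 4, sg 1 5]"
      unfolding W_def by simp
    then show ?thesis using card_length[of "[sg 0 1, sg 2 3, sg 4 5, sg 6 7, sg 0 4, sg 0 5, sg 1 4, sg 1 5]"]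
      by simp
  qed
  have finW: "finite W" unfolding W_def by simp
  have cU: "card U \<ge> card V - 8"
    using diff_card_le_card_Diff[OF finW, of V] cW unfolding U_def by linarith
  have "card U \<le> mu V seg_adj"
  proof -
    have sub: "{card U | U. mutual_visibility_set V seg_adj U} \<subseteq> card ` Pow V"
    proof
      fix c assume "c \<in> {card U | U. mutual_visibility_set V seg_adj U}"
      then obtain U' where "c = card U'" "mutual_visibility_set V seg_adj U'" by blast
      then have "c = card U'" "U' \<in> Pow V" unfolding mutual_visibility_set_def by simp_all
      then show "c \<in> card ` Pow V" by (rule rev_image_eqI[rotated])
    qed
    have fin2: "finite {card U | U. mutual_visibility_set V seg_adj U}"
      by (rule finite_subset[OF sub]) (use finV in simp)
    have "card U \<in> {card U | U. mutual_visibility_set V seg_adj U}" using mvs by blast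
    then show ?thesis unfolding mu_def by (rule Max_ge[OF fin2])
  qed
  then show ?thesis using cU cardV unfolding V_def by linarith
qed

end
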